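(* Consider the decentralized Thompson Sampling algorithm for Bernoulli rewards described in the context, with learning rate $\eta>0$ and prior $\mathrm{Beta}(1,1)$. Then for every round $t\ge1$, agent $i\in[N]$ and arm $k\in[K]$, the distribution $Q^{(i)}_{k,t}$ (with density $q^{(i)}_{k,t}$) from which $\theta^{(i)}_k(t)$ is sampled is $\mathrm{Beta}(\alpha^{(i)}_k(t),\beta^{(i)}_k(t))$, where \[ \alpha^{(i)}_k(t)=\eta\sum_{\tau=1}^{t-1}\sum_{j=1}^N W^{t-\tau}_{ij}Y^{(j)}_{\tau}\mathbf 1\{A^{(j)}_\tau=k\}+1,\qquad \beta^{(i)}_k(t)=\eta\sum_{\tau=1}^{t-1}\sum_{j=1}^N W^{t-\tau}_{ij}(1-Y^{(j)}_{\tau})\mathbf 1\{A^{(j)}_\tau=k\}+1, \] and $W^{s}_{ij}$ denotes the $(i,j)$ entry of the matrix power $W^s$.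
   Context: $N$ agents on a connected undirected graph; $W\in\mathbb R^{N\times N}$ doubly stochastic with nonnegative entries, $W_{ij}>0$ for $i\ne j$ iff $\{i,j\}$ is an edge. $K$ arms with Bernoulli rewards (arm $k$ has mean $\mu_k$), independent across agents, rounds, arms. Let $p_\theta(y)=\theta^y(1-\theta)^{1-y}$ on $[0,1]$. Decentralized Thompson Sampling (learning rate $\eta$, prior density $q_0$ on $[0,1]$): agent $i$ maintains densities $q^{(i)}_{k,t}$ with $q^{(i)}_{k,1}=q_0$. In round $t$, agent $i$ draws $\theta^{(i)}_k(t)\sim q^{(i)}_{k,t}$ independently over $k$, plays $A^{(i)}_t\in\arg\max_k\theta^{(i)}_k(t)$, observes reward $Y^{(i)}_t$, forms $\tilde q^{(i)}_{k,t+1}(\theta)\propto q^{(i)}_{k,t}(\theta)p_\theta(Y^{(i)}_t)^\eta$ (normalized on $[0,1]$) for $k=A^{(i)}_t$ and $\tilde q^{(i)}_{k,t+1}=q^{(i)}_{k,t}$ otherwise, and after communication sets $q^{(i)}_{k,t+1}(\theta)=\frac{\exp(\sum_{j}W_{ij}\log\tilde q^{(j)}_{k,t+1}(\theta))}{\int_0^1\exp(\sum_jW_{ij}\log\tilde q^{(j)}_{k,t+1}(\phi))d\phi}$. *)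

theory Defs
  imports "HOL-Analysis.Analysis"
begin

text \<open>Agents are 0..<N, arms 0..<K, rounds are t = 1,2,...  Row/column indices of W are agents.\<close>

fun mat_pow :: "nat \<Rightarrow> (nat \<Rightarrow> nat \<Rightarrow> real) \<Rightarrow> nat \<Rightarrow> nat \<Rightarrow> nat \<Rightarrow> real" where
  "mat_pow N W 0 i j = (if i = j then 1 else 0)"
| "mat_pow N W (Suc s) i j = (\<Sum>l<N. mat_pow N W s i l * W l j)"

definition gossip_matrix :: "nat \<Rightarrow> (nat \<Rightarrow> nat \<Rightarrow> real) \<Rightarrow> bool" where
  "gossip_matrix N W \<longleftrightarrow>
     (\<forall>i<N. \<forall>j<N. W i j \<ge> 0) \<and>
     (\<forall>i<N. (\<Sum>j<N. W i j) = 1) \<and>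
     (\<forall>j<N. (\<Sum>i<N. W i j) = 1) \<and>
     (\<forall>i<N. \<forall>j<N. (W i j > 0) = (W j i > 0)) \<and>
     (\<forall>i<N. \<forall>j<N. (i, j) \<in> ({(a, b). a < N \<and> b < N \<and> a \<noteq> b \<and> W a b > 0})\<^sup>*)"

definition bern_lik :: "real \<Rightarrow> real \<Rightarrow> real" where
  "bern_lik \<theta> y = \<theta> powr y * (1 - \<theta>) powr (1 - y)"

definition beta_density :: "real \<Rightarrow> real \<Rightarrow> real \<Rightarrow> real" where
  "beta_density a b \<theta> =
     (if 0 < \<theta> \<and> \<theta> < 1 then \<theta> powr (a - 1) * (1 - \<theta>) powr (b - 1) / Beta a b else 0)"

definition normalize01 :: "(real \<Rightarrow> real) \<Rightarrow> real \<Rightarrow> real" where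
  "normalize01 f \<theta> = f \<theta> / integral {0..1} f"

text \<open>Given the realised actions A t j (arm played by agent j in
  round t) and rewards Y t j, dts_q N W A Y \<eta> q0 n i k is the density q^{(i)}_{k,n+1}
  (index shift: n = 0 is round 1).\<close>
fun dts_q :: "nat \<Rightarrow> (nat \<Rightarrow> nat \<Rightarrow> real) \<Rightarrow> (nat \<Rightarrow> nat \<Rightarrow> nat) \<Rightarrow> (nat \<Rightarrow> nat \<Rightarrow> real)
              \<Rightarrow> real \<Rightarrow> (real \<Rightarrow> real) \<Rightarrow> nat \<Rightarrow> nat \<Rightarrow> nat \<Rightarrow> real \<Rightarrow> real" where
  "dts_q N W A Y \<eta> q0 0 i k = q0"
| "dts_q N W A Y \<eta> q0 (Suc n) i k =
     (let qt = (\<lambda>j. if A (Suc n) j = k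
                     then normalize01 (\<lambda>\<theta>. dts_q N W A Y \<eta> q0 n j k \<theta> * bern_lik \<theta> (Y (Suc n) j) powr \<eta>)
                     else dts_q N W A Y \<eta> q0 n j k)
      in normalize01 (\<lambda>\<theta>. exp (\<Sum>j<N. W i j * ln (qt j \<theta>))))"

definition dts_density where
  "dts_density N W A Y \<eta> q0 t i k = dts_q N W A Y \<eta> q0 (t - 1) i k"

end

theory Submission imports Defs begin

lemma Beta_pos: "a > 0 \<Longrightarrow> b > 0 \<Longrightarrow> Beta a b > (0::real)"
  unfolding Beta_def by (simp add: Gamma_real_pos_exp)

lemma norm_beta:
  fixes f :: "real \<Rightarrow> real"
  assumes a: "a > 0" and b: "b > 0" and c: "c > 0"
    and f: "\<And>x. 0 < x \<Longrightarrow> x < 1 \<Longrightarrow> f x = c * (x powr (a - 1) * (1 - x) powr (b - 1))"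
    and th: "0 < \<theta>" "\<theta> < 1"
  shows "normalize01 f \<theta> = beta_density a b \<theta>"
proof -
  have "((\<lambda>x. c * (x powr (a - 1) * (1 - x) powr (b - 1))) has_integral c * Beta a b) {0..1}"
    by (intro has_integral_mult_right has_integral_Beta_real a b)
  hence "((\<lambda>x. c * (x powr (a - 1) * (1 - x) powr (b - 1))) has_integral c * Beta a b) {0<..<1}"
    by (simp add: has_integral_Icc_iff_Ioo)
  hence "(f has_integral c * Beta a b) {0<..<1}"
    by (subst has_integral_cong[where g="\<lambda>x. c * (x powr (a - 1) * (1 - x) powr (b - 1))"]) (auto simp: f)
  hence "(f has_integral c * Beta a b) {0..1}"
    by (simp add: has_integral_Icc_iff_Ioo)
  hence "integral {0..1} f = c * Beta a b" by (rule integral_unique)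
  thus ?thesis using th c unfolding normalize01_def beta_density_def by (simp add: f)
qed

lemma mat_pow1:
  assumes "i < N"
  shows "mat_pow N W (Suc 0) i j = W i j"
proof -
  have "mat_pow N W (Suc 0) i j = (\<Sum>l<N. (if i = l then 1 else 0) * W l j)"
    by simp
  also have "\<dots> = (\<Sum>l<N. if i = l then W l j else 0)"
    by (rule sum.cong) auto
  also have "\<dots> = W i j" using assms by (simp add: sum.delta)
  finally show ?thesis .
qed

lemma mat_pow_left:
  assumes "i < N" "j < N"
  shows "mat_pow N W (Suc s) i j = (\<Sum>l<N. W i l * mat_pow N W s l j)"
  using assms(2)
proof (induction s arbitrary: j)
  case 0
  have "(\<Sum>l<N. W i l * mat_pow N W 0 l j) = (\<Sum>l<N. if l = j then W i l else 0)"
    by (rule sum.cong) auto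
  then show ?case using 0 mat_pow1[OF assms(1), of W j] by (simp add: sum.delta')
next
  case (Suc s)
  have "mat_pow N W (Suc (Suc s)) i j = (\<Sum>m<N. mat_pow N W (Suc s) i m * W m j)" by simp
  also have "\<dots> = (\<Sum>m<N. \<Sum>l<N. W i l * mat_pow N W s l m * W m j)"
    using Suc.IH by (simp add: sum_distrib_right mult.assoc)
  also have "\<dots> = (\<Sum>l<N. \<Sum>m<N. W i l * mat_pow N W s l m * W m j)"
    by (rule sum.swap)
  also have "\<dots> = (\<Sum>l<N. W i l * mat_pow N W (Suc s) l j)"
    by (simp add: sum_distrib_left mult.assoc)
  finally show ?case .
qed

definition Ssum :: "nat \<Rightarrow> (nat \<Rightarrow> nat \<Rightarrow> real) \<Rightarrow> (nat \<Rightarrow> nat \<Rightarrow> real) \<Rightarrow> nat \<Rightarrow> nat \<Rightarrow> real" where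
  "Ssum N W g n i = (\<Sum>\<tau>=1..n. \<Sum>j<N. mat_pow N W (Suc n - \<tau>) i j * g \<tau> j)"

lemma Ssum_rec:
  assumes "i < N"
  shows "Ssum N W g (Suc n) i = (\<Sum>j<N. W i j * (Ssum N W g n j + g (Suc n) j))"
proof -
  have "Ssum N W g (Suc n) i = (\<Sum>\<tau>=1..n. \<Sum>j<N. mat_pow N W (Suc (Suc n) - \<tau>) i j * g \<tau> j)
      + (\<Sum>j<N. mat_pow N W 1 i j * g (Suc n) j)"
    unfolding Ssum_def by simp
  also have "(\<Sum>j<N. mat_pow N W 1 i j * g (Suc n) j) = (\<Sum>j<N. W i j * g (Suc n) j)"
    using assms mat_pow1[OF assms] by simp
  also have "(\<Sum>\<tau>=1..n. \<Sum>j<N. mat_pow N W (Suc (Suc n) - \<tau>) i j * g \<tau> j)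
      = (\<Sum>\<tau>=1..n. \<Sum>j<N. \<Sum>l<N. W i l * mat_pow N W (Suc n - \<tau>) l j * g \<tau> j)"
  proof (rule sum.cong[OF refl], rule sum.cong[OF refl])
    fix \<tau> j assume "\<tau> \<in> {1..n}" "j \<in> {..<N}"
    hence "Suc (Suc n) - \<tau> = Suc (Suc n - \<tau>)" by auto
    thus "mat_pow N W (Suc (Suc n) - \<tau>) i j * g \<tau> j = (\<Sum>l<N. W i l * mat_pow N W (Suc n - \<tau>) l j * g \<tau> j)"
      using mat_pow_left[OF assms, of j W "Suc n - \<tau>"] \<open>j \<in> {..<N}\<close> by (simp add: sum_distrib_right)
  qed
  also have "\<dots> = (\<Sum>l<N. W i l * Ssum N W g n l)"
  proof -
    have "(\<Sum>\<tau>=1..n. \<Sum>j<N. \<Sum>l<N. W i l * mat_pow N W (Suc n - \<tau>) l j * g \<tau> j)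
       = (\<Sum>\<tau>=1..n. \<Sum>l<N. \<Sum>j<N. W i l * mat_pow N W (Suc n - \<tau>) l j * g \<tau> j)"
      by (rule sum.cong[OF refl], rule sum.swap)
    also have "\<dots> = (\<Sum>l<N. \<Sum>\<tau>=1..n. \<Sum>j<N. W i l * mat_pow N W (Suc n - \<tau>) l j * g \<tau> j)"
      by (rule sum.swap)
    also have "\<dots> = (\<Sum>l<N. W i l * Ssum N W g n l)"
      unfolding Ssum_def sum_distrib_left by (simp add: mult.assoc)
    finally show ?thesis .
  qed
  finally show ?thesis by (simp add: distrib_left sum.distrib)
qed
lemma ln_beta_density:
  assumes "a > 0" "b > 0" "0 < x" "x < 1"
  shows "ln (beta_density a b x) = (a - 1) * ln x + (b - 1) * ln (1 - x) - ln (Beta a b)"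
  using assms Beta_pos[of a b] unfolding beta_density_def
  by (simp add: ln_mult ln_div ln_powr)

lemma bayes_step:
  assumes a: "a \<ge> 1" and b: "b \<ge> 1" and eta: "\<eta> > 0" and y: "y \<in> {0, 1}"
    and q: "\<And>x. 0 < x \<Longrightarrow> x < 1 \<Longrightarrow> q x = beta_density a b x"
    and th: "0 < \<theta>" "\<theta> < 1"
  shows "normalize01 (\<lambda>x. q x * bern_lik x y powr \<eta>) \<theta> =
         beta_density (a + \<eta> * y) (b + \<eta> * (1 - y)) \<theta>"
proof (rule norm_beta[where c = "1 / Beta a b"])
  show "0 < a + \<eta> * y" "0 < b + \<eta> * (1 - y)" using a b eta y by auto
  show "0 < 1 / Beta a b" using Beta_pos[of a b] a b by simp
  fix x :: real assume x: "0 < x" "x < 1"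
  show "q x * bern_lik x y powr \<eta> =
        1 / Beta a b * (x powr (a + \<eta> * y - 1) * (1 - x) powr (b + \<eta> * (1 - y) - 1))"
    using y
  proof
    assume "y = 0"
    then show ?thesis using x q[OF x]
      by (simp add: bern_lik_def beta_density_def powr_add[symmetric] algebra_simps)
  next
    assume "y \<in> {1}"
    then show ?thesis using x q[OF x]
      by (simp add: bern_lik_def beta_density_def powr_add[symmetric] algebra_simps)
  qed
qed (use th in auto)

theorem lemma7:
  fixes N K :: nat and W :: "nat \<Rightarrow> nat \<Rightarrow> real" and \<eta> :: real
    and A :: "nat \<Rightarrow> nat \<Rightarrow> nat" and Y :: "nat \<Rightarrow> nat \<Rightarrow> real"
    and t i k :: nat and \<theta> :: real
  assumes "N \<ge> 1" and "K \<ge> 1"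
    and "gossip_matrix N W"
    and "\<eta> > 0"
    and "\<And>\<tau> j. \<tau> \<ge> 1 \<Longrightarrow> j < N \<Longrightarrow> A \<tau> j < K"
    and "\<And>\<tau> j. \<tau> \<ge> 1 \<Longrightarrow> j < N \<Longrightarrow> Y \<tau> j \<in> {0, 1}"
    and "t \<ge> 1" and "i < N" and "k < K"
    and "0 < \<theta>" and "\<theta> < 1"
  shows "dts_density N W A Y \<eta> (beta_density 1 1) t i k \<theta> =
         beta_density
           (\<eta> * (\<Sum>\<tau>=1..t-1. \<Sum>j<N. mat_pow N W (t - \<tau>) i j * Y \<tau> j * (if A \<tau> j = k then 1 else 0)) + 1)
           (\<eta> * (\<Sum>\<tau>=1..t-1. \<Sum>j<N. mat_pow N W (t - \<tau>) i j * (1 - Y \<tau> j) * (if A \<tau> j = k then 1 else 0)) + 1)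
           \<theta>"
proof -
  note gm = assms(3)[unfolded gossip_matrix_def]
  have Wnn: "\<And>i j. i < N \<Longrightarrow> j < N \<Longrightarrow> W i j \<ge> 0" using gm by blast
  have Wsum: "\<And>i. i < N \<Longrightarrow> (\<Sum>j<N. W i j) = 1" using gm by blast
  define e where "e = (\<lambda>\<tau> j. if A \<tau> j = k then 1 else (0::real))"
  define gY where "gY = (\<lambda>\<tau> j. Y \<tau> j * e \<tau> j)"
  define gN where "gN = (\<lambda>\<tau> j. (1 - Y \<tau> j) * e \<tau> j)"
  have Y01: "\<And>n j. j < N \<Longrightarrow> Y (Suc n) j \<in> {0, 1}" using assms(6) by simp
  have gYnn: "gY (Suc n) j \<ge> 0" if "j < N" for n j using Y01[OF that, of n] unfolding gY_def e_def by auto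
  have gNnn: "gN (Suc n) j \<ge> 0" if "j < N" for n j using Y01[OF that, of n] unfolding gN_def e_def by auto
  have main: "\<forall>i<N. Ssum N W gY n i \<ge> 0 \<and> Ssum N W gN n i \<ge> 0 \<and>
      (\<forall>x. 0 < x \<and> x < 1 \<longrightarrow> dts_q N W A Y \<eta> (beta_density 1 1) n i k x =
          beta_density (\<eta> * Ssum N W gY n i + 1) (\<eta> * Ssum N W gN n i + 1) x)" for n
  proof (induction n)
    case 0
    then show ?case by (simp add: Ssum_def)
  next
    case (Suc n)
    define a' where "a' = (\<lambda>j. \<eta> * (Ssum N W gY n j + gY (Suc n) j) + 1)"
    define b' where "b' = (\<lambda>j. \<eta> * (Ssum N W gN n j + gN (Suc n) j) + 1)"
    define qt where "qt = (\<lambda>j. if A (Suc n) j = k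
                     then normalize01 (\<lambda>\<theta>. dts_q N W A Y \<eta> (beta_density 1 1) n j k \<theta> * bern_lik \<theta> (Y (Suc n) j) powr \<eta>)
                     else dts_q N W A Y \<eta> (beta_density 1 1) n j k)"
    have a'pos: "a' j \<ge> 1" "b' j \<ge> 1" if "j < N" for j
      using Suc.IH that gYnn[OF that, of n] gNnn[OF that, of n] assms(4) unfolding a'_def b'_def
      by auto
    have qt: "qt j x = beta_density (a' j) (b' j) x" if j: "j < N" and x: "0 < x" "x < 1" for j x
    proof (cases "A (Suc n) j = k")
      case True
      have "qt j x = beta_density (\<eta> * Ssum N W gY n j + 1 + \<eta> * Y (Suc n) j)
                 (\<eta> * Ssum N W gN n j + 1 + \<eta> * (1 - Y (Suc n) j)) x"
        unfolding qt_def if_P[OF True]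
        by (rule bayes_step) (use Suc.IH j x assms(4) Y01[OF j] in auto)
      then show ?thesis using True unfolding a'_def b'_def gY_def gN_def e_def
        by (simp add: algebra_simps)
    next
      case False
      then show ?thesis using Suc.IH j x unfolding qt_def a'_def b'_def gY_def gN_def e_def
        by simp
    qed
    show ?case
    proof (intro allI impI conjI)
      fix i assume i: "i < N"
      have SY: "Ssum N W gY (Suc n) i = (\<Sum>j<N. W i j * (Ssum N W gY n j + gY (Suc n) j))"
        by (rule Ssum_rec[OF i])
      have SN: "Ssum N W gN (Suc n) i = (\<Sum>j<N. W i j * (Ssum N W gN n j + gN (Suc n) j))"
        by (rule Ssum_rec[OF i])
      show "Ssum N W gY (Suc n) i \<ge> 0" unfolding SY
        using Suc.IH Wnn[OF i] gYnn by (intro sum_nonneg mult_nonneg_nonneg add_nonneg_nonneg) auto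
      show "Ssum N W gN (Suc n) i \<ge> 0" unfolding SN
        using Suc.IH Wnn[OF i] gNnn by (intro sum_nonneg mult_nonneg_nonneg add_nonneg_nonneg) auto
      have aS: "(\<Sum>j<N. W i j * a' j) = \<eta> * Ssum N W gY (Suc n) i + 1"
        unfolding SY a'_def by (simp add: algebra_simps sum.distrib sum_distrib_left sum_distrib_right[symmetric] Wsum[OF i])
      have bS: "(\<Sum>j<N. W i j * b' j) = \<eta> * Ssum N W gN (Suc n) i + 1"
        unfolding SN b'_def by (simp add: algebra_simps sum.distrib sum_distrib_left sum_distrib_right[symmetric] Wsum[OF i])
      define C where "C = (\<Sum>j<N. W i j * ln (Beta (a' j) (b' j)))"
      fix x :: real assume x: "0 < x \<and> x < 1"
      show "dts_q N W A Y \<eta> (beta_density 1 1) (Suc n) i k x =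
          beta_density (\<eta> * Ssum N W gY (Suc n) i + 1) (\<eta> * Ssum N W gN (Suc n) i + 1) x"
        unfolding dts_q.simps Let_def qt_def[symmetric]
      proof (rule norm_beta[where c = "exp (- C)"])
        fix z :: real assume z: "0 < z" "z < 1"
        have "(\<Sum>j<N. W i j * ln (qt j z)) =
              (\<Sum>j<N. W i j * ((a' j - 1) * ln z + (b' j - 1) * ln (1 - z) - ln (Beta (a' j) (b' j))))"
        proof (intro sum.cong refl)
          fix j assume "j \<in> {..<N}"
          hence j: "j < N" by simp
          have "0 < a' j" "0 < b' j" using a'pos[OF j] by auto
          thus "W i j * ln (qt j z) = W i j * ((a' j - 1) * ln z + (b' j - 1) * ln (1 - z) - ln (Beta (a' j) (b' j)))"
            using qt[OF j z] ln_beta_density[OF _ _ z] by simp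
        qed
        also have "\<dots> = ((\<Sum>j<N. W i j * a' j) - 1) * ln z + ((\<Sum>j<N. W i j * b' j) - 1) * ln (1 - z) - C"
        proof -
          have "(\<Sum>j<N. W i j * ((a' j - 1) * ln z + (b' j - 1) * ln (1 - z) - ln (Beta (a' j) (b' j))))
             = (\<Sum>j<N. (W i j * a' j) * ln z - W i j * ln z + (W i j * b' j) * ln (1 - z) - W i j * ln (1 - z) - W i j * ln (Beta (a' j) (b' j)))"
            by (rule sum.cong) (auto simp: algebra_simps)
          also have "\<dots> = (\<Sum>j<N. W i j * a' j) * ln z - (\<Sum>j<N. W i j) * ln z + (\<Sum>j<N. W i j * b' j) * ln (1 - z) - (\<Sum>j<N. W i j) * ln (1 - z) - C"
            unfolding C_def by (simp only: sum_subtractf sum.distrib sum_distrib_right)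
          finally show ?thesis unfolding Wsum[OF i] by (simp add: algebra_simps)
        qed
        finally have eqS: "(\<Sum>j<N. W i j * ln (qt j z)) = ((\<Sum>j<N. W i j * a' j) - 1) * ln z + ((\<Sum>j<N. W i j * b' j) - 1) * ln (1 - z) - C" .
        show "exp (\<Sum>j<N. W i j * ln (qt j z)) = exp (- C) *
            (z powr (\<eta> * Ssum N W gY (Suc n) i + 1 - 1) * (1 - z) powr (\<eta> * Ssum N W gN (Suc n) i + 1 - 1))"
          unfolding eqS aS bS using z by (simp add: powr_def exp_diff exp_add exp_minus field_simps)
      qed (use x aS bS \<open>Ssum N W gY (Suc n) i \<ge> 0\<close> \<open>Ssum N W gN (Suc n) i \<ge> 0\<close> assms(4) in \<open>auto intro: add_nonneg_pos mult_nonneg_nonneg\<close>)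
    qed
  qed
  obtain n where n: "t = Suc n" using assms(7) by (cases t) auto
  have "dts_density N W A Y \<eta> (beta_density 1 1) t i k \<theta> =
        beta_density (\<eta> * Ssum N W gY n i + 1) (\<eta> * Ssum N W gN n i + 1) \<theta>"
    unfolding dts_density_def using main[of n] n assms(8,10,11) by simp
  moreover have "Ssum N W gY n i = (\<Sum>\<tau>=1..t-1. \<Sum>j<N. mat_pow N W (t - \<tau>) i j * Y \<tau> j * (if A \<tau> j = k then 1 else 0))"
    unfolding Ssum_def gY_def e_def n by (simp add: mult.assoc)
  moreover have "Ssum N W gN n i = (\<Sum>\<tau>=1..t-1. \<Sum>j<N. mat_pow N W (t - \<tau>) i j * (1 - Y \<tau> j) * (if A \<tau> j = k then 1 else 0))"
    unfolding Ssum_def gN_def e_def n by (simp add: mult.assoc)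
  ultimately show ?thesis by simp
qed

end
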